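(* Let $\mathbb K$ be a field with $2\in\mathbb K^\times$ and $A$ a unital commutative associative $\mathbb K$-algebra with unit $\mathbf 1$. The linear map $\gamma_A:\Lambda^2(A)\to\Omega^1(A)$, $a\wedge b\mapsto a\,d_A(b)-b\,d_A(a)$, is surjective and $\ker\gamma_A=T_0(A)$.
   Context: $(\Omega^1(A),d_A)$ is the universal differential module of $A$: $\Omega^1(A)$ is an $A$-module and $d_A:A\to\Omega^1(A)$ a derivation such that every derivation into an $A$-module factors uniquely through an $A$-module map. $T_0(A)$ is the linear span of $ab\wedge c+bc\wedge a+ca\wedge b-abc\wedge\mathbf 1$ for $a,b,c\in A$. *)

theory Defs
  imports Main HOL.Vector_Spaces "HOL-Library.Function_Algebras"
begin

definition fsupp :: "('b \<Rightarrow> 'c::zero) \<Rightarrow> bool" where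
  "fsupp f \<longleftrightarrow> finite {x. f x \<noteq> 0}"

definition kalg :: "('k::field \<Rightarrow> 'a::comm_ring_1 \<Rightarrow> 'a) \<Rightarrow> bool" where
  "kalg sm \<longleftrightarrow> vector_space sm \<and> (\<forall>c x y. sm c (x * y) = sm c x * y)"

text \<open>The free A-module on symbols [b], b in A; fdiff a b is the formal element a [b].\<close>
definition fdiff :: "'a::comm_ring_1 \<Rightarrow> 'a \<Rightarrow> ('a \<Rightarrow> 'a)" where
  "fdiff a b = (\<lambda>x. if x = b then a else 0)"

definition ascale :: "'a::comm_ring_1 \<Rightarrow> ('a \<Rightarrow> 'a) \<Rightarrow> ('a \<Rightarrow> 'a)" where
  "ascale a f = (\<lambda>x. a * f x)"

definition omega_free :: "('a::comm_ring_1 \<Rightarrow> 'a) set" where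
  "omega_free = {f. fsupp f}"

text \<open>Relations: d is additive, K-linear and satisfies the Leibniz rule.
  Omega^1(A) = omega_free / omega_rel sm, with d_A(b) the class of fdiff 1 b.\<close>
definition omega_rel :: "('k::field \<Rightarrow> 'a::comm_ring_1 \<Rightarrow> 'a) \<Rightarrow> ('a \<Rightarrow> 'a) set" where
  "omega_rel sm = module.span ascale
     ({fdiff 1 (x + y) - fdiff 1 x - fdiff 1 y | x y. True}
      \<union> {fdiff 1 (sm c x) - fdiff (sm c 1) x | c x. True}
      \<union> {fdiff 1 (x * y) - fdiff x y - fdiff y x | x y. True})"

text \<open>The free K-vector space on pairs (a,b); wg a b is the basis vector of (a,b).\<close>
definition wg :: "'a \<Rightarrow> 'a \<Rightarrow> ('a \<times> 'a \<Rightarrow> 'k::field)" where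
  "wg a b = (\<lambda>p. if p = (a, b) then 1 else 0)"

definition kscale :: "'k::field \<Rightarrow> ('a \<times> 'a \<Rightarrow> 'k) \<Rightarrow> ('a \<times> 'a \<Rightarrow> 'k)" where
  "kscale c f = (\<lambda>p. c * f p)"

definition lambda_free :: "('a \<times> 'a \<Rightarrow> 'k::field) set" where
  "lambda_free = {f. fsupp f}"

text \<open>Relations: bilinearity over K and alternation.
  Lambda^2(A) = lambda_free / span(lambda_rel_gens sm), a \<and> b the class of wg a b.\<close>
definition lambda_rel_gens :: "('k::field \<Rightarrow> 'a::comm_ring_1 \<Rightarrow> 'a) \<Rightarrow> ('a \<times> 'a \<Rightarrow> 'k) set" where
  "lambda_rel_gens sm =
      {wg (x + y) z - wg x z - wg y z | x y z. True}
    \<union> {wg z (x + y) - wg z x - wg z y | x y z. True}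
    \<union> {wg (sm c x) z - kscale c (wg x z) | c x z. True}
    \<union> {wg z (sm c x) - kscale c (wg z x) | c x z. True}
    \<union> {wg x x | x. True}"

text \<open>Lifts of the spanning elements of T_0(A).\<close>
definition T0_gens :: "('a::comm_ring_1 \<times> 'a \<Rightarrow> 'k::field) set" where
  "T0_gens = {wg (a * b) c + wg (b * c) a + wg (c * a) b - wg (a * b * c) (1::'a)
              | a b c. True}"

definition gamma_free :: "('k::field \<Rightarrow> 'a::comm_ring_1 \<Rightarrow> 'a) \<Rightarrow> ('a \<times> 'a \<Rightarrow> 'k) \<Rightarrow> ('a \<Rightarrow> 'a)" where
  "gamma_free sm w = (\<Sum>p\<in>{p. w p \<noteq> 0}.
      (\<lambda>x. sm (w p) (fdiff (fst p) (snd p) x - fdiff (snd p) (fst p) x)))"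

end

theory Submission
  imports Defs
begin


lemma fun_sum_apply: "(sum f S) x = (\<Sum>i\<in>S. f i x)"
  by (induction S rule: infinite_finite_induct) auto

interpretation AS: module "ascale :: 'a::comm_ring_1 \<Rightarrow> ('a \<Rightarrow> 'a) \<Rightarrow> ('a \<Rightarrow> 'a)"
  by unfold_locales (auto simp: ascale_def fun_eq_iff algebra_simps)

interpretation KS: vector_space "kscale :: 'k::field \<Rightarrow> ('b \<times> 'b \<Rightarrow> 'k) \<Rightarrow> ('b \<times> 'b \<Rightarrow> 'k)"
  by unfold_locales (auto simp: kscale_def fun_eq_iff algebra_simps)

lemma fsupp_0[simp]: "fsupp 0" by (simp add: fsupp_def)

lemma fsupp_add[simp]: "fsupp f \<Longrightarrow> fsupp g \<Longrightarrow> fsupp (f + (g::'b \<Rightarrow> 'c::monoid_add))"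
  unfolding fsupp_def by (rule finite_subset[of _ "{x. f x \<noteq> 0} \<union> {x. g x \<noteq> 0}"]) auto

lemma fsupp_uminus[simp]: "fsupp (- (f::'b \<Rightarrow> 'c::group_add)) = fsupp f"
  unfolding fsupp_def by simp

lemma fsupp_diff[simp]: "fsupp f \<Longrightarrow> fsupp g \<Longrightarrow> fsupp (f - (g::'b \<Rightarrow> 'c::group_add))"
  unfolding fsupp_def by (rule finite_subset[of _ "{x. f x \<noteq> 0} \<union> {x. g x \<noteq> 0}"]) auto

lemma fsupp_sum: "(\<And>i. i \<in> S \<Longrightarrow> fsupp (f i)) \<Longrightarrow> fsupp (sum f S :: 'b \<Rightarrow> 'c::comm_monoid_add)"
  by (induction S rule: infinite_finite_induct) auto

lemma fsupp_wg[simp]: "fsupp (wg a b)"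
  unfolding fsupp_def wg_def by (rule finite_subset[of _ "{(a,b)}"]) auto

lemma fsupp_fdiff[simp]: "fsupp (fdiff a b)"
  unfolding fsupp_def fdiff_def by (rule finite_subset[of _ "{b}"]) auto

lemma fsupp_kscale[simp]: "fsupp f \<Longrightarrow> fsupp (kscale c f)"
  unfolding fsupp_def kscale_def by (rule finite_subset[of _ "{x. f x \<noteq> 0}"]) auto

lemma fsupp_ascale[simp]: "fsupp f \<Longrightarrow> fsupp (ascale c f)"
  unfolding fsupp_def ascale_def by (rule finite_subset[of _ "{x. f x \<noteq> 0}"]) auto

lemma fdiff_add: "fdiff (a + b) c = fdiff a c + fdiff b c"
  by (auto simp: fdiff_def fun_eq_iff)

lemma fdiff_0[simp]: "fdiff 0 c = 0"
  by (auto simp: fdiff_def fun_eq_iff)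

lemma ascale_fdiff[simp]: "ascale r (fdiff a b) = fdiff (r * a) b"
  by (auto simp: fdiff_def fun_eq_iff ascale_def)

lemma omega_expand: "fsupp f \<Longrightarrow> f = (\<Sum>x\<in>{x. f x \<noteq> 0}. fdiff (f x) x)"
  unfolding fsupp_def by (auto simp: fun_eq_iff fun_sum_apply fdiff_def)

lemma lambda_expand: "w = (\<Sum>p\<in>{p. w p \<noteq> 0}. kscale (w p) (wg (fst p) (snd p)))" if "fsupp w"
proof -
  have e: "\<And>i p. w i * (if p = i then 1 else 0) = (if p = i then w p else 0)" by simp
  show ?thesis using that unfolding fsupp_def
    by (auto simp: fun_eq_iff fun_sum_apply wg_def kscale_def e)
qed



locale KA =
  fixes sm :: "'k::field \<Rightarrow> 'a::comm_ring_1 \<Rightarrow> 'a"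
  assumes kalg: "kalg sm"
begin

sublocale V: vector_space sm using kalg unfolding kalg_def by auto

lemma sm_mult: "sm c (x * y) = sm c x * y" using kalg unfolding kalg_def by auto

lemma sm_eq: "sm c x = sm c 1 * x" using sm_mult[of c 1 x] by simp

definition gterm :: "'k \<Rightarrow> 'a \<times> 'a \<Rightarrow> ('a \<Rightarrow> 'a)" where
  "gterm c p = fdiff (sm c 1 * fst p) (snd p) - fdiff (sm c 1 * snd p) (fst p)"

lemma gterm_0[simp]: "gterm 0 p = 0" by (simp add: gterm_def)

lemma gterm_add: "gterm (a + b) p = gterm a p + gterm b p"
  by (simp add: gterm_def V.scale_left_distrib distrib_right fdiff_add)

lemma gterm_fsupp[simp]: "fsupp (gterm c p)" by (simp add: gterm_def)

lemma gterm_mult: "gterm (c * d) p = ascale (sm c 1) (gterm d p)"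
proof -
  have "sm (c * d) 1 = sm c 1 * sm d 1" using sm_eq[of c "sm d 1"] by simp
  then show ?thesis by (simp add: gterm_def AS.scale_right_diff_distrib mult.assoc)
qed

lemma gamma_alt: "gamma_free sm w = (\<Sum>p\<in>{p. w p \<noteq> 0}. gterm (w p) p)"
  unfolding gamma_free_def
proof (rule sum.cong[OF refl])
  fix p
  show "(\<lambda>x. sm (w p) (fdiff (fst p) (snd p) x - fdiff (snd p) (fst p) x)) = gterm (w p) p"
    apply (rule ext)
    apply (subst sm_eq)
    by (auto simp: gterm_def fdiff_def)
qed

lemma gamma_sup: "finite S \<Longrightarrow> {p. w p \<noteq> 0} \<subseteq> S \<Longrightarrow> gamma_free sm w = (\<Sum>p\<in>S. gterm (w p) p)"
  unfolding gamma_alt by (rule sum.mono_neutral_left) auto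

lemma gamma_add: assumes "fsupp v" "fsupp w"
  shows "gamma_free sm (v + w) = gamma_free sm v + gamma_free sm w"
proof -
  let ?S = "{p. v p \<noteq> 0} \<union> {p. w p \<noteq> 0}"
  have f: "finite ?S" using assms unfolding fsupp_def by auto
  have "gamma_free sm (v + w) = (\<Sum>p\<in>?S. gterm ((v + w) p) p)" by (rule gamma_sup[OF f]) auto
  also have "\<dots> = (\<Sum>p\<in>?S. gterm (v p) p) + (\<Sum>p\<in>?S. gterm (w p) p)"
    by (simp add: gterm_add sum.distrib)
  also have "\<dots> = gamma_free sm v + gamma_free sm w"
    by (simp add: gamma_sup[OF f])
  finally show ?thesis .
qed

lemma gamma_0[simp]: "gamma_free sm 0 = 0" by (simp add: gamma_alt)

lemma gamma_diff: assumes "fsupp v" "fsupp w"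
  shows "gamma_free sm (v - w) = gamma_free sm v - gamma_free sm w"
proof -
  have "gamma_free sm v = gamma_free sm ((v - w) + w)" by simp
  also have "\<dots> = gamma_free sm (v - w) + gamma_free sm w" using assms by (intro gamma_add) auto
  finally show ?thesis by simp
qed

lemma gamma_scale: assumes "fsupp w"
  shows "gamma_free sm (kscale c w) = ascale (sm c 1) (gamma_free sm w)"
proof -
  have f: "finite {p. w p \<noteq> 0}" using assms unfolding fsupp_def by auto
  have "gamma_free sm (kscale c w) = (\<Sum>p\<in>{p. w p \<noteq> 0}. gterm (kscale c w p) p)"
    by (rule gamma_sup[OF f]) (auto simp: kscale_def)
  also have "\<dots> = ascale (sm c 1) (gamma_free sm w)"
    by (simp add: kscale_def gterm_mult AS.scale_sum_right gamma_alt)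
  finally show ?thesis .
qed

lemma gamma_wg: "gamma_free sm (wg a b) = fdiff a b - fdiff b a"
proof -
  have "gamma_free sm (wg a b) = (\<Sum>p\<in>{(a,b)}. gterm (wg a b p) p)"
    by (rule gamma_sup) (auto simp: wg_def split: if_splits)
  then show ?thesis by (simp add: wg_def gterm_def)
qed

lemma gamma_fsupp[simp]: "fsupp (gamma_free sm w)"
  unfolding gamma_alt by (rule fsupp_sum) simp

lemma gamma_sum: "(\<And>i. i \<in> I \<Longrightarrow> fsupp (f i)) \<Longrightarrow>
   gamma_free sm (sum f I) = (\<Sum>i\<in>I. gamma_free sm (f i))"
  by (induction I rule: infinite_finite_induct) (auto simp: gamma_add fsupp_sum)

end


context KA
begin

abbreviation "Rel \<equiv> omega_rel sm"

lemma R1: "fdiff 1 (x + y) - fdiff 1 x - fdiff 1 y \<in> Rel"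
  unfolding omega_rel_def by (rule AS.span_base) blast
lemma R2: "fdiff 1 (sm c x) - fdiff (sm c 1) x \<in> Rel"
  unfolding omega_rel_def by (rule AS.span_base) blast
lemma R3: "fdiff 1 (x * y) - fdiff x y - fdiff y x \<in> Rel"
  unfolding omega_rel_def by (rule AS.span_base) blast

lemma Rel_scale: "f \<in> Rel \<Longrightarrow> ascale r f \<in> Rel"
  unfolding omega_rel_def by (rule AS.span_scale)
lemma Rel_add: "f \<in> Rel \<Longrightarrow> g \<in> Rel \<Longrightarrow> f + g \<in> Rel"
  unfolding omega_rel_def by (rule AS.span_add)
lemma Rel_diff: "f \<in> Rel \<Longrightarrow> g \<in> Rel \<Longrightarrow> f - g \<in> Rel"
  unfolding omega_rel_def by (rule AS.span_diff)
lemma Rel_neg: "f \<in> Rel \<Longrightarrow> - f \<in> Rel"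
  unfolding omega_rel_def by (rule AS.span_neg)
lemma Rel_0: "0 \<in> Rel"
  unfolding omega_rel_def by (rule AS.span_zero)
lemma Rel_sum: "(\<And>i. i \<in> I \<Longrightarrow> f i \<in> Rel) \<Longrightarrow> sum f I \<in> Rel"
  unfolding omega_rel_def by (rule AS.span_sum)

lemma Rel_one: "fdiff a 1 \<in> Rel"
proof -
  have "- (fdiff 1 (1 * 1) - fdiff 1 1 - fdiff 1 1) \<in> Rel" by (rule Rel_neg[OF R3])
  then have "fdiff 1 1 \<in> Rel" by simp
  from Rel_scale[OF this, of a] show ?thesis by simp
qed

lemma eqRel: "x \<in> Rel \<Longrightarrow> y = x \<Longrightarrow> y \<in> Rel" by simp

lemma gens_gamma:
  assumes "g \<in> lambda_rel_gens sm \<union> T0_gens"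
  shows "fsupp g \<and> gamma_free sm g \<in> Rel"
  using assms unfolding lambda_rel_gens_def T0_gens_def
proof (elim UnE CollectE exE conjE)
  fix x y z assume g: "g = wg (x + y) z - wg x z - wg y z"
  show ?thesis unfolding g
    apply (simp add: gamma_diff gamma_wg)
    apply (rule eqRel[OF Rel_neg[OF Rel_scale[OF R1[of x y]], of z]])
    by (simp add: AS.scale_right_diff_distrib fdiff_add algebra_simps)
next
  fix x y z assume g: "g = wg z (x + y) - wg z x - wg z y"
  show ?thesis unfolding g
    apply (simp add: gamma_diff gamma_wg)
    apply (rule eqRel[OF Rel_scale[OF R1[of x y]], of _ z])
    by (simp add: AS.scale_right_diff_distrib fdiff_add algebra_simps)
next
  fix c x z assume g: "g = wg (sm c x) z - kscale c (wg x z)"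
  have e: "sm c x = sm c 1 * x" by (rule sm_eq)
  show ?thesis unfolding g
    apply (simp add: gamma_diff gamma_wg gamma_scale)
    apply (rule eqRel[OF Rel_neg[OF Rel_scale[OF R2[of c x]], of z]])
    by (simp add: AS.scale_right_diff_distrib e algebra_simps)
next
  fix c x z assume g: "g = wg z (sm c x) - kscale c (wg z x)"
  have e: "sm c x = sm c 1 * x" by (rule sm_eq)
  show ?thesis unfolding g
    apply (simp add: gamma_diff gamma_wg gamma_scale)
    apply (rule eqRel[OF Rel_scale[OF R2[of c x]], of _ z])
    by (simp add: AS.scale_right_diff_distrib e algebra_simps)
next
  fix x assume g: "g = wg x x"
  show ?thesis unfolding g by (simp add: gamma_wg Rel_0)
next
  fix a b c assume g: "g = wg (a * b) c + wg (b * c) a + wg (c * a) b - wg (a * b * c) 1"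
  have m: "(R3' :: 'a \<Rightarrow> 'a) \<in> Rel" if "R3' = fdiff 1 (a * b * c) - fdiff (a * b) c - fdiff c (a * b)
       - ascale a (fdiff 1 (b * c) - fdiff b c - fdiff c b)
       - ascale b (fdiff 1 (c * a) - fdiff c a - fdiff a c) - fdiff (a * b * c) 1" for R3'
    unfolding that
    by (intro Rel_diff Rel_scale R3 Rel_one)
  show ?thesis unfolding g
    apply (simp add: gamma_diff gamma_add gamma_wg)
    apply (rule m)
    by (simp add: AS.scale_right_diff_distrib algebra_simps)
qed

lemma gamma_Sp:
  assumes "w \<in> KS.span (lambda_rel_gens sm \<union> T0_gens)"
  shows "gamma_free sm w \<in> Rel"
proof -
  have sub: "KS.subspace {w. fsupp w \<and> gamma_free sm w \<in> Rel}"
    unfolding KS.subspace_def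
    by (auto simp: gamma_add gamma_scale Rel_add Rel_scale Rel_0)
  have "w \<in> {w. fsupp w \<and> gamma_free sm w \<in> Rel}"
    by (rule KS.span_subspace_induct[OF assms sub]) (use gens_gamma in auto)
  then show ?thesis by simp
qed

end


context KA
begin

definition bterm :: "'a \<Rightarrow> 'a \<Rightarrow> ('a \<times> 'a \<Rightarrow> 'k)" where
  "bterm a x = kscale (1/2) (wg a x + wg 1 (a * x))"

lemma bterm_fsupp[simp]: "fsupp (bterm a x)" by (simp add: bterm_def)

lemma gamma_bterm:
  assumes two: "(2::'k) \<noteq> 0"
  shows "gamma_free sm (bterm a x) - fdiff a x \<in> Rel"
proof -
  define h where "h = sm (1/2) 1"
  have o: "1/2 + 1/2 = (1::'k)" using two by (simp add: field_simps)
  have hh: "h + h = 1" unfolding h_def V.scale_left_distrib[symmetric] o by simp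
  have fa: "fdiff a x = fdiff (h * a) x + fdiff (h * a) x"
    by (simp add: fdiff_add[symmetric] distrib_right[symmetric] hh)
  have "gamma_free sm (bterm a x) = ascale h (fdiff a x - fdiff x a + fdiff 1 (a * x) - fdiff (a * x) 1)"
    by (simp add: bterm_def gamma_scale gamma_add gamma_wg h_def AS.scale_right_diff_distrib
        AS.scale_right_distrib algebra_simps)
  then have "gamma_free sm (bterm a x) - fdiff a x =
      ascale h (fdiff 1 (a * x) - fdiff a x - fdiff x a - fdiff (a * x) 1)"
    apply simp
    apply (subst (2) fa)
    by (simp add: AS.scale_right_diff_distrib AS.scale_right_distrib algebra_simps)
  also have "\<dots> \<in> Rel" by (intro Rel_scale Rel_diff R3 Rel_one)
  finally show ?thesis .
qed

lemma surj:
  assumes two: "(2::'k) \<noteq> 0" and om: "fsupp \<omega>"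
  shows "\<exists>w\<in>lambda_free. gamma_free sm w - \<omega> \<in> Rel"
proof
  let ?S = "{x. \<omega> x \<noteq> 0}"
  let ?w = "\<Sum>x\<in>?S. bterm (\<omega> x) x"
  show "?w \<in> lambda_free" unfolding lambda_free_def by (simp add: fsupp_sum)
  have "gamma_free sm ?w - \<omega> = (\<Sum>x\<in>?S. gamma_free sm (bterm (\<omega> x) x)) - (\<Sum>x\<in>?S. fdiff (\<omega> x) x)"
    by (subst (2) omega_expand[OF om]) (simp add: gamma_sum)
  also have "\<dots> = (\<Sum>x\<in>?S. gamma_free sm (bterm (\<omega> x) x) - fdiff (\<omega> x) x)"
    by (simp add: sum_subtractf)
  also have "\<dots> \<in> Rel" by (intro Rel_sum gamma_bterm[OF two])
  finally show "gamma_free sm ?w - \<omega> \<in> Rel" .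
qed

end


context KA
begin

abbreviation "Sp \<equiv> KS.span (lambda_rel_gens sm \<union> T0_gens)"

lemma Sp_base: "g \<in> lambda_rel_gens sm \<or> g \<in> T0_gens \<Longrightarrow> g \<in> Sp"
  by (rule KS.span_base) auto

lemma S1: "wg (x + y) z - wg x z - wg y z \<in> Sp"
  by (rule Sp_base) (unfold lambda_rel_gens_def, blast)
lemma S2: "wg z (x + y) - wg z x - wg z y \<in> Sp"
  by (rule Sp_base) (unfold lambda_rel_gens_def, blast)
lemma S3: "wg (sm c x) z - kscale c (wg x z) \<in> Sp"
  by (rule Sp_base) (unfold lambda_rel_gens_def, blast)
lemma S4: "wg z (sm c x) - kscale c (wg z x) \<in> Sp"
  by (rule Sp_base) (unfold lambda_rel_gens_def, blast)
lemma S5: "wg x x \<in> Sp"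
  by (rule Sp_base) (unfold lambda_rel_gens_def, blast)
lemma ST: "wg (a * b) c + wg (b * c) a + wg (c * a) b - wg (a * b * c) 1 \<in> Sp"
  by (rule Sp_base) (unfold T0_gens_def, blast)

lemma Sp_add: "f \<in> Sp \<Longrightarrow> g \<in> Sp \<Longrightarrow> f + g \<in> Sp" by (rule KS.span_add)
lemma Sp_diff: "f \<in> Sp \<Longrightarrow> g \<in> Sp \<Longrightarrow> f - g \<in> Sp" by (rule KS.span_diff)
lemma Sp_neg: "f \<in> Sp \<Longrightarrow> - f \<in> Sp" by (rule KS.span_neg)
lemma Sp_scale: "f \<in> Sp \<Longrightarrow> kscale c f \<in> Sp" by (rule KS.span_scale)
lemma Sp_0: "0 \<in> Sp" by (rule KS.span_zero)
lemma Sp_sum: "(\<And>i. i \<in> I \<Longrightarrow> f i \<in> Sp) \<Longrightarrow> sum f I \<in> Sp" by (rule KS.span_sum)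
lemma eqSp: "x \<in> Sp \<Longrightarrow> y = x \<Longrightarrow> y \<in> Sp" by simp

lemma wg0l: "wg 0 z \<in> Sp"
  using Sp_neg[OF S1[of 0 0 z]] by simp
lemma wg0r: "wg z 0 \<in> Sp"
  using Sp_neg[OF S2[of z 0 0]] by simp

lemma anti: "wg a b + wg b a \<in> Sp"
proof -
  have "wg a b + wg b a = (wg (a + b) (a + b)) - (wg (a + b) (a + b) - wg a (a + b) - wg b (a + b))
     - (wg a (a + b) - wg a a - wg a b) - (wg b (a + b) - wg b a - wg b b) - wg a a - wg b b"
    by (simp add: algebra_simps)
  also have "\<dots> \<in> Sp" by (intro Sp_diff S1 S2 S5)
  finally show ?thesis .
qed

definition beta :: "('a \<Rightarrow> 'a) \<Rightarrow> ('a \<times> 'a \<Rightarrow> 'k)" where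
  "beta f = (\<Sum>x\<in>{x. f x \<noteq> 0}. bterm (f x) x)"

lemma bterm_0: "bterm 0 x \<in> Sp"
  unfolding bterm_def by (intro Sp_scale Sp_add wg0l) (simp add: wg0r)

lemma beta_sup:
  assumes "finite S" "{x. f x \<noteq> 0} \<subseteq> S"
  shows "(\<Sum>x\<in>S. bterm (f x) x) - beta f \<in> Sp"
proof -
  have "(\<Sum>x\<in>S. bterm (f x) x) = (\<Sum>x\<in>S - {x. f x \<noteq> 0}. bterm (f x) x) + beta f"
    unfolding beta_def by (rule sum.subset_diff[OF assms(2,1)])
  then have "(\<Sum>x\<in>S. bterm (f x) x) - beta f = (\<Sum>x\<in>S - {x. f x \<noteq> 0}. bterm (f x) x)" by simp
  also have "\<dots> \<in> Sp" by (intro Sp_sum) (simp add: bterm_0)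
  finally show ?thesis .
qed

lemma bterm_add: "bterm (a + b) x - bterm a x - bterm b x \<in> Sp"
proof -
  have "bterm (a + b) x - bterm a x - bterm b x =
     kscale (1/2) ((wg (a + b) x - wg a x - wg b x) + (wg 1 (a * x + b * x) - wg 1 (a * x) - wg 1 (b * x)))"
    by (simp add: bterm_def fun_eq_iff kscale_def algebra_simps)
  also have "\<dots> \<in> Sp" by (intro Sp_scale Sp_add S1 S2)
  finally show ?thesis .
qed

lemma beta_add:
  assumes "fsupp f" "fsupp g"
  shows "beta (f + g) - beta f - beta g \<in> Sp"
proof -
  let ?S = "{x. f x \<noteq> 0} \<union> {x. g x \<noteq> 0}"
  have fS: "finite ?S" using assms unfolding fsupp_def by auto
  have A: "(\<Sum>x\<in>?S. bterm ((f + g) x) x) - beta (f + g) \<in> Sp" by (rule beta_sup[OF fS]) auto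
  have B: "(\<Sum>x\<in>?S. bterm (f x) x) - beta f \<in> Sp" by (rule beta_sup[OF fS]) auto
  have C: "(\<Sum>x\<in>?S. bterm (g x) x) - beta g \<in> Sp" by (rule beta_sup[OF fS]) auto
  have D: "(\<Sum>x\<in>?S. bterm ((f + g) x) x - bterm (f x) x - bterm (g x) x) \<in> Sp"
    by (intro Sp_sum) (simp add: bterm_add)
  have eq: "beta (f + g) - beta f - beta g =
     (\<Sum>x\<in>?S. bterm ((f + g) x) x - bterm (f x) x - bterm (g x) x)
      - ((\<Sum>x\<in>?S. bterm ((f + g) x) x) - beta (f + g)) + ((\<Sum>x\<in>?S. bterm (f x) x) - beta f)
      + ((\<Sum>x\<in>?S. bterm (g x) x) - beta g)"
    by (simp add: sum_subtractf sum.distrib algebra_simps)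
  show ?thesis unfolding eq by (intro Sp_add Sp_diff A B C D)
qed

lemma beta_0[simp]: "beta 0 = 0" by (simp add: beta_def)

lemma beta_diff:
  assumes "fsupp f" "fsupp g"
  shows "beta (f - g) - (beta f - beta g) \<in> Sp"
proof -
  have "beta (f - g + g) - beta (f - g) - beta g \<in> Sp" using assms by (intro beta_add) auto
  then have "- (beta f - beta (f - g) - beta g) \<in> Sp" by (intro Sp_neg) simp
  then show ?thesis by (simp add: algebra_simps)
qed

lemma beta_sum:
  "(\<And>i. i \<in> I \<Longrightarrow> fsupp (f i)) \<Longrightarrow> beta (sum f I) - (\<Sum>i\<in>I. beta (f i)) \<in> Sp"
proof (induction I rule: infinite_finite_induct)
  case (infinite A) then show ?case using Sp_0 by (simp add: beta_def zero_fun_def)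
next
  case empty then show ?case using Sp_0 by (simp add: beta_def zero_fun_def)
next
  case (insert i I)
  have a: "beta (f i + sum f I) - beta (f i) - beta (sum f I) \<in> Sp"
    using insert by (intro beta_add) (auto intro: fsupp_sum)
  have b: "beta (sum f I) - (\<Sum>i\<in>I. beta (f i)) \<in> Sp" by (rule insert.IH) (use insert.prems in auto)
  have eq: "beta (sum f (insert i I)) - (\<Sum>i\<in>insert i I. beta (f i)) =
     (beta (f i + sum f I) - beta (f i) - beta (sum f I)) + (beta (sum f I) - (\<Sum>i\<in>I. beta (f i)))"
    using insert by simp
  show ?case unfolding eq by (rule Sp_add[OF a b])
qed

lemma beta_fdiff: "beta (fdiff a x) - bterm a x \<in> Sp"
proof -
  have "(\<Sum>y\<in>{x}. bterm (fdiff a x y) y) - beta (fdiff a x) \<in> Sp"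
    by (rule beta_sup) (auto simp: fdiff_def split: if_splits)
  then have "- (bterm a x - beta (fdiff a x)) \<in> Sp" by (intro Sp_neg) (simp add: fdiff_def)
  then show ?thesis by simp
qed

lemma beta2: "beta (fdiff a1 b1 - fdiff a2 b2) - (bterm a1 b1 - bterm a2 b2) \<in> Sp"
proof -
  have "beta (fdiff a1 b1 - fdiff a2 b2) - (bterm a1 b1 - bterm a2 b2) =
    (beta (fdiff a1 b1 - fdiff a2 b2) - (beta (fdiff a1 b1) - beta (fdiff a2 b2)))
    + (beta (fdiff a1 b1) - bterm a1 b1) - (beta (fdiff a2 b2) - bterm a2 b2)"
    by (simp add: algebra_simps)
  also have "\<dots> \<in> Sp" by (intro Sp_add Sp_diff beta_diff beta_fdiff) auto
  finally show ?thesis .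
qed

lemma beta3: "beta (fdiff a1 b1 - fdiff a2 b2 - fdiff a3 b3)
   - (bterm a1 b1 - bterm a2 b2 - bterm a3 b3) \<in> Sp"
proof -
  have "beta (fdiff a1 b1 - fdiff a2 b2 - fdiff a3 b3) - (bterm a1 b1 - bterm a2 b2 - bterm a3 b3) =
    (beta (fdiff a1 b1 - fdiff a2 b2 - fdiff a3 b3) - (beta (fdiff a1 b1 - fdiff a2 b2) - beta (fdiff a3 b3)))
    + (beta (fdiff a1 b1 - fdiff a2 b2) - (bterm a1 b1 - bterm a2 b2)) - (beta (fdiff a3 b3) - bterm a3 b3)"
    by (simp add: algebra_simps)
  also have "\<dots> \<in> Sp" by (intro Sp_add Sp_diff beta_diff beta_fdiff beta2) auto
  finally show ?thesis .
qed

end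


context KA
begin

lemma B1: "bterm c (x + y) - bterm c x - bterm c y \<in> Sp"
proof -
  have "bterm c (x + y) - bterm c x - bterm c y = kscale (1/2)
     ((wg c (x + y) - wg c x - wg c y) + (wg 1 (c * x + c * y) - wg 1 (c * x) - wg 1 (c * y)))"
    by (simp add: bterm_def fun_eq_iff kscale_def algebra_simps)
  also have "\<dots> \<in> Sp" by (intro Sp_scale Sp_add S2)
  finally show ?thesis .
qed

lemma B2: "bterm c (sm s x) - bterm (c * sm s 1) x \<in> Sp"
proof -
  have e2: "c * sm s 1 = sm s c" using sm_eq[of s c] by (simp add: mult.commute)
  have e3: "c * sm s x = sm s c * x" using sm_eq[of s c] sm_eq[of s x] by (simp add: ac_simps)
  have "bterm c (sm s x) - bterm (c * sm s 1) x = kscale (1/2)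
     ((wg c (sm s x) - kscale s (wg c x)) - (wg (sm s c) x - kscale s (wg c x)))"
    unfolding bterm_def e2 e3 by (simp add: fun_eq_iff kscale_def algebra_simps)
  also have "\<dots> \<in> Sp" by (intro Sp_scale Sp_diff S3 S4)
  finally show ?thesis .
qed

lemma B3: "bterm c (x * y) - bterm (c * x) y - bterm (c * y) x \<in> Sp"
proof -
  have "bterm c (x * y) - bterm (c * x) y - bterm (c * y) x = kscale (1/2)
     ((wg c (x * y) + wg (x * y) c) - (wg (x * y) c + wg (y * c) x + wg (c * x) y - wg (x * y * c) 1)
      - (wg 1 (x * y * c) + wg (x * y * c) 1))"
    by (simp add: bterm_def fun_eq_iff kscale_def algebra_simps)
  also have "\<dots> \<in> Sp" by (intro Sp_scale Sp_diff anti ST)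
  finally show ?thesis .
qed

lemma Sp_from: "X - Y \<in> Sp \<Longrightarrow> Y \<in> Sp \<Longrightarrow> X \<in> Sp"
  using Sp_add[of "X - Y" Y] by simp

lemma beta_Rel:
  assumes "f \<in> Rel"
  shows "fsupp f \<and> beta f \<in> Sp"
  using assms unfolding omega_rel_def
proof (induction rule: AS.span_induct_alt)
  case base
  show ?case using Sp_0 by (simp add: beta_def zero_fun_def fsupp_def)
next
  case (step c x y)
  have gx: "fsupp (ascale c x) \<and> beta (ascale c x) \<in> Sp"
    using step(1)
  proof (elim UnE CollectE exE conjE)
    fix a b assume x: "x = fdiff 1 (a + b) - fdiff 1 a - fdiff 1 b"
    have e: "ascale c x = fdiff c (a + b) - fdiff c a - fdiff c b"
      unfolding x by (simp add: AS.scale_right_diff_distrib)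
    show ?thesis unfolding e by (auto intro: Sp_from[OF beta3 B1])
  next
    fix s a assume x: "x = fdiff 1 (sm s a) - fdiff (sm s 1) a"
    have e: "ascale c x = fdiff c (sm s a) - fdiff (c * sm s 1) a"
      unfolding x by (simp add: AS.scale_right_diff_distrib)
    show ?thesis unfolding e by (auto intro: Sp_from[OF beta2 B2])
  next
    fix a b assume x: "x = fdiff 1 (a * b) - fdiff a b - fdiff b a"
    have e: "ascale c x = fdiff c (a * b) - fdiff (c * a) b - fdiff (c * b) a"
      unfolding x by (simp add: AS.scale_right_diff_distrib)
    show ?thesis unfolding e by (auto intro: Sp_from[OF beta3 B3])
  qed
  have "beta (ascale c x + y) - beta (ascale c x) - beta y \<in> Sp"
    using gx step(2) by (intro beta_add) auto
  then have "beta (ascale c x + y) - (beta (ascale c x) + beta y) \<in> Sp" by (simp add: algebra_simps)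
  moreover have "beta (ascale c x) + beta y \<in> Sp" using gx step(2) by (intro Sp_add) auto
  ultimately have "beta (ascale c x + y) \<in> Sp" by (rule Sp_from)
  moreover have "fsupp (ascale c x + y)" using gx step(2) by (intro fsupp_add) auto
  ultimately show ?case by blast
qed

lemma Kl:
  assumes two: "(2::'k) \<noteq> 0"
  shows "bterm (sm c a) b - bterm (sm c b) a - kscale c (wg a b) \<in> Sp"
proof -
  have "(4::'k) = 2 * 2" by simp
  then have four: "(4::'k) \<noteq> 0" using two by (metis mult_eq_0_iff)
  have e: "sm c a * b = sm c b * a"
    using sm_mult[of c a b] sm_mult[of c b a] by (simp add: mult.commute)
  have "bterm (sm c a) b - bterm (sm c b) a - kscale c (wg a b) = kscale (1/2)
     ((wg (sm c a) b - kscale c (wg a b)) - (wg (sm c b) a - kscale c (wg b a))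
      - kscale c (wg a b + wg b a))"
    unfolding bterm_def e using two four by (simp add: fun_eq_iff kscale_def field_simps)
  also have "\<dots> \<in> Sp" by (intro Sp_scale Sp_diff S3 anti)
  finally show ?thesis .
qed

lemma beta_gamma:
  assumes two: "(2::'k) \<noteq> 0" and w: "fsupp w"
  shows "beta (gamma_free sm w) - w \<in> Sp"
proof -
  let ?S = "{p. w p \<noteq> 0}"
  let ?g = "\<lambda>p. gterm (w p) p"
  let ?b = "\<lambda>p. bterm (sm (w p) 1 * fst p) (snd p) - bterm (sm (w p) 1 * snd p) (fst p)"
  let ?k = "\<lambda>p. kscale (w p) (wg (fst p) (snd p))"
  have A: "beta (sum ?g ?S) - (\<Sum>p\<in>?S. beta (?g p)) \<in> Sp" by (rule beta_sum) simp
  have B: "(\<Sum>p\<in>?S. beta (?g p) - ?b p) \<in> Sp"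
    by (intro Sp_sum) (simp add: gterm_def beta2)
  have K: "(\<Sum>p\<in>?S. ?b p - ?k p) \<in> Sp"
  proof (intro Sp_sum)
    fix p
    have "sm (w p) 1 * fst p = sm (w p) (fst p)" "sm (w p) 1 * snd p = sm (w p) (snd p)"
      by (simp_all add: sm_eq[symmetric])
    then show "?b p - ?k p \<in> Sp" using Kl[OF two] by simp
  qed
  have "beta (gamma_free sm w) - w = (beta (sum ?g ?S) - (\<Sum>p\<in>?S. beta (?g p)))
      + (\<Sum>p\<in>?S. beta (?g p) - ?b p) + (\<Sum>p\<in>?S. ?b p - ?k p)"
    apply (subst (2) lambda_expand[OF w])
    by (simp add: gamma_alt sum_subtractf)
  also have "\<dots> \<in> Sp" by (intro Sp_add A B K)
  finally show ?thesis .
qed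

end

theorem lemma1p1:
  fixes sm :: "'k::field \<Rightarrow> 'a::comm_ring_1 \<Rightarrow> 'a"
  assumes "kalg sm"
    and "(2::'k) \<noteq> 0"
  shows "(\<forall>\<omega>\<in>omega_free. \<exists>w\<in>lambda_free. gamma_free sm w - \<omega> \<in> omega_rel sm)
       \<and> (\<forall>w\<in>lambda_free.
            gamma_free sm w \<in> omega_rel sm
              \<longleftrightarrow> w \<in> module.span kscale (lambda_rel_gens sm \<union> T0_gens))"
proof -
  interpret KA sm by unfold_locales (rule assms(1))
  have P1: "\<forall>\<omega>\<in>omega_free. \<exists>w\<in>lambda_free. gamma_free sm w - \<omega> \<in> omega_rel sm"
    using surj[OF assms(2)] unfolding omega_free_def by auto
  have P2: "gamma_free sm w \<in> omega_rel sm \<longleftrightarrow> w \<in> Sp" if w: "w \<in> lambda_free" for w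
  proof
    assume "w \<in> Sp" then show "gamma_free sm w \<in> omega_rel sm" by (rule gamma_Sp)
  next
    assume "gamma_free sm w \<in> omega_rel sm"
    then have a: "beta (gamma_free sm w) \<in> Sp" using beta_Rel by blast
    have b: "beta (gamma_free sm w) - w \<in> Sp"
      using beta_gamma[OF assms(2)] w unfolding lambda_free_def by auto
    have "w = beta (gamma_free sm w) - (beta (gamma_free sm w) - w)" by simp
    also have "\<dots> \<in> Sp" by (rule Sp_diff[OF a b])
    finally show "w \<in> Sp" .
  qed
  show ?thesis using P1 P2 by blast
qed

end
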